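(* Consider the Byzantine-resilient state estimation algorithm described in the context, run on a complete communication graph on $n$ agents with trimming parameter $b$, where $n>2b$, and let ${\mathcal{A}}$ be the set of Byzantine agents with $|{\mathcal{A}}|\le b$ and $\phi=|{\mathcal{V}}\setminus{\mathcal{A}}|$. Then for each iteration $t\ge 1$, each good agent $i\in{\mathcal{V}}\setminus{\mathcal{A}}$ and each coordinate $k\in\{1,\dots,d\}$, there exist coefficients $(\beta_{ij}^k(t))_{j\in{\mathcal{V}}\setminus{\mathcal{A}}}$ such that (i) $x_i^k(t)=\sum_{j\in{\mathcal{V}}\setminus{\mathcal{A}}}\beta_{ij}^k(t)\,\langle z_j(t),e_k\rangle$; and (ii) $0\le \beta_{ij}^k(t)\le \frac{1}{\phi-b}$ for all $j\in{\mathcal{V}}\setminus{\mathcal{A}}$, and $\sum_{j\in{\mathcal{V}}\setminus{\mathcal{A}}}\beta_{ij}^k(t)=1$.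
   Context: Agents ${\mathcal{V}}=\{1,\dots,n\}$ communicate over a directed graph $G=({\mathcal{V}},{\mathcal{E}})$; ${\mathcal{N}}_i$ denotes the set of incoming neighbors of $i$ (here $G$ is complete, so ${\mathcal{N}}_i\cup\{i\}={\mathcal{V}}$). There is an unknown vector $\theta^*\in\mathbb{R}^d$. Agent $i$ has a matrix $H_i\in\mathbb{R}^{n_i\times d}$ and at each time $t=1,2,\dots$ obtains $y_i(t)=H_i\theta^*+w_i(t)$. An unknown set ${\mathcal{A}}\subseteq{\mathcal{V}}$ of Byzantine agents with $|{\mathcal{A}}|\le b$ is chosen by an adversary; $b$ is known to all agents. Byzantine agents may send arbitrary vectors, possibly different vectors to different recipients. $e_k$ is the $k$-th standard basis vector of $\mathbb{R}^d$. Algorithm (run by each good agent $i\in{\mathcal{V}}\setminus{\mathcal{A}}$): $x_i(0)\in\mathbb{R}^d$ is arbitrary. At iteration $t\ge1$: compute $z_i(t)=x_i(t-1)-H_i^\top\big(H_i x_i(t-1)-\frac1t\sum_{r=1}^t y_i(r)\big)$; send $z_i(t)$ to all out-neighbors; agent $i$ receives $m_{ji}(t)\in\mathbb{R}^d$ from each $j\in{\mathcal{N}}_i$, where $m_{ji}(t)=z_j(t)$ if $j\notin{\mathcal{A}}$ and $m_{ji}(t)$ is arbitrary if $j\in{\mathcal{A}}$, and sets $m_{ii}(t)=z_i(t)$. For each $k=1,\dots,d$: sort the values $\langle m_{ji}(t),e_k\rangle$, $j\in{\mathcal{N}}_i\cup\{i\}$, in non-decreasing order, remove the $b$ largest and the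 $b$ smallest values, let ${\mathcal{R}}_i^k(t)$ be the set of indices of the remaining values, and set $x_i^k(t)=\frac{1}{|{\mathcal{R}}_i^k(t)|}\sum_{j\in{\mathcal{R}}_i^k(t)}\langle m_{ji}(t),e_k\rangle$. Then $x_i(t)=(x_i^1(t),\dots,x_i^d(t))^\top$. *)

theory Defs
  imports Complex_Main
begin

definition trimmed_mean :: "nat \<Rightarrow> real list \<Rightarrow> real" where
  "trimmed_mean b xs =
     (let ys = drop b (take (length xs - b) (sort xs)) in sum_list ys / real (length ys))"

end

theory Submission
  imports Defs "HOL-Library.Multiset"
begin

lemma take_le_all:
  fixes xs :: "real list"
  assumes "sorted xs" "j < length xs" "x \<in> set (take (Suc j) xs)"
  shows "x \<le> xs ! j"
proof -
  from assms(3) obtain q where q: "q < length (take (Suc j) xs)" "x = take (Suc j) xs ! q"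
    by (auto simp: in_set_conv_nth)
  then have "q \<le> j" "x = xs ! q" by auto
  then show ?thesis using assms(1,2) sorted_nth_mono by blast
qed

lemma drop_ge_all:
  fixes xs :: "real list"
  assumes "sorted xs" "x \<in> set (drop j xs)"
  shows "xs ! j \<le> x"
proof -
  from assms(2) obtain q where q: "q < length (drop j xs)" "x = drop j xs ! q"
    by (auto simp: in_set_conv_nth)
  then have "j + q < length xs" "x = xs ! (j + q)" by auto
  then show ?thesis using assms(1) sorted_nth_mono by (metis le_add1)
qed

lemma count_lower:
  fixes xs ys :: "real list"
  assumes sx: "sorted xs" and sy: "sorted ys" and sub: "mset ys \<subseteq># mset xs"
    and len: "length xs = length ys + e" and p: "p < length ys"
  shows "ys ! p \<le> xs ! (p + e)"
proof (rule ccontr)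
  assume na: "\<not> ?thesis"
  define a where "a = xs ! (p + e)"
  have lt: "a < ys ! p" using na a_def by auto
  define P where "P = (\<lambda>x::real. x \<le> a)"
  have "filter_mset P (mset (take (Suc (p+e)) xs)) = mset (take (Suc (p+e)) xs)"
    using take_le_all[OF sx, of "p+e"] len p by (auto simp: P_def a_def intro!: filter_mset_eq_conv[THEN iffD2])
  moreover have "mset (take (Suc (p+e)) xs) \<subseteq># mset xs"
    by (metis append_take_drop_id mset_append mset_subset_eq_add_left)
  ultimately have "mset (take (Suc (p+e)) xs) \<subseteq># filter_mset P (mset xs)"
    by (metis multiset_filter_mono)
  then have h1: "Suc (p+e) \<le> size (filter_mset P (mset xs))"
  proof -
    have "size (mset (take (Suc (p+e)) xs)) = Suc (p+e)" using len p by simp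
    then show ?thesis using size_mset_mono[OF \<open>mset (take (Suc (p+e)) xs) \<subseteq># filter_mset P (mset xs)\<close>] by simp
  qed
  have "filter_mset P (mset (drop p ys)) = {#}"
    using drop_ge_all[OF sy] lt by (force simp: P_def filter_empty_mset)
  then have fe: "filter_mset P (mset ys) = filter_mset P (mset (take p ys))"
    by (metis append_take_drop_id mset_append filter_union_mset add.right_neutral)
  then have h2: "size (filter_mset P (mset ys)) \<le> p"
  proof -
    have "size (filter_mset P (mset (take p ys))) \<le> size (mset (take p ys))" by (rule size_filter_mset_lesseq)
    also have "\<dots> \<le> p" by simp
    finally show ?thesis using fe by simp
  qed
  have dec: "mset xs = mset ys + (mset xs - mset ys)" using sub by (simp add: subset_mset.add_diff_inverse)
  have h3: "size (mset xs - mset ys) = e" using sub len by (simp add: size_Diff_submset)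
  have "size (filter_mset P (mset xs)) = size (filter_mset P (mset ys)) + size (filter_mset P (mset xs - mset ys))"
    by (subst dec) simp
  also have "\<dots> \<le> p + e" using h2 h3 size_filter_mset_lesseq[of P "mset xs - mset ys"] by linarith
  finally show False using h1 by simp
qed

lemma count_upper:
  fixes xs ys :: "real list"
  assumes sx: "sorted xs" and sy: "sorted ys" and sub: "mset ys \<subseteq># mset xs"
    and p: "p < length ys"
  shows "xs ! p \<le> ys ! p"
proof (rule ccontr)
  assume na: "\<not> ?thesis"
  define a where "a = xs ! p"
  have lt: "ys ! p < a" using na a_def by auto
  define P where "P = (\<lambda>x::real. x < a)"
  have "filter_mset P (mset (take (Suc p) ys)) = mset (take (Suc p) ys)"
    using take_le_all[OF sy, of p] p lt by (force simp: P_def intro!: filter_mset_eq_conv[THEN iffD2])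
  moreover have "mset (take (Suc p) ys) \<subseteq># mset ys"
    by (metis append_take_drop_id mset_append mset_subset_eq_add_left)
  ultimately have "mset (take (Suc p) ys) \<subseteq># filter_mset P (mset ys)"
    by (metis multiset_filter_mono)
  also have "\<dots> \<subseteq># filter_mset P (mset xs)" using sub by (rule multiset_filter_mono)
  finally have sb: "mset (take (Suc p) ys) \<subseteq># filter_mset P (mset xs)" .
  have h1: "Suc p \<le> size (filter_mset P (mset xs))"
  proof -
    have "size (mset (take (Suc p) ys)) = Suc p" using p by simp
    then show ?thesis using size_mset_mono[OF sb] by simp
  qed
  have "filter_mset P (mset (drop p xs)) = {#}"
    using drop_ge_all[OF sx] by (force simp: P_def a_def)
  then have fe: "filter_mset P (mset xs) = filter_mset P (mset (take p xs))"
    by (metis append_take_drop_id mset_append filter_union_mset add.right_neutral)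
  have "size (filter_mset P (mset (take p xs))) \<le> size (mset (take p xs))" by (rule size_filter_mset_lesseq)
  also have "\<dots> \<le> p" by simp
  finally show False using fe h1 by simp
qed

lemma pivot:
  fixes S S' a c p :: real
  assumes "S \<le> a * p" "c * p \<le> S'" "0 \<le> a" "0 \<le> c"
  shows "c * S \<le> a * S'"
proof -
  have "c * S \<le> c * (a * p)" using assms by (simp add: mult_left_mono)
  also have "\<dots> = a * (c * p)" by simp
  also have "\<dots> \<le> a * S'" using assms by (simp add: mult_left_mono)
  finally show ?thesis .
qed

lemma avg_A:
  fixes f :: "nat \<Rightarrow> real"
  assumes mono: "\<And>i j. i \<le> j \<Longrightarrow> j < M \<Longrightarrow> f i \<le> f j" and dM: "d < M"
  shows "real (M - d) * (\<Sum>q<M. f q) \<le> real M * (\<Sum>q\<in>{d..<M}. f q)"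
proof -
  have split: "(\<Sum>q<M. f q) = (\<Sum>q<d. f q) + (\<Sum>q\<in>{d..<M}. f q)"
    using dM by (metis le_less lessThan_atLeast0 sum.atLeastLessThan_concat zero_le)
  have s0: "(\<Sum>q<d. f q) \<le> real d * f d"
    using sum_bounded_above[of "{..<d}" f "f d"] mono dM by auto
  have s2: "real (M - d) * f d \<le> (\<Sum>q\<in>{d..<M}. f q)"
    using sum_bounded_below[of "{d..<M}" "f d" f] mono dM by auto
  have "real (M - d) * (\<Sum>q<d. f q) \<le> real d * (\<Sum>q\<in>{d..<M}. f q)"
    by (rule pivot[OF s0 s2]) auto
  then show ?thesis unfolding split using dM by (simp add: algebra_simps of_nat_diff)
qed

lemma avg_B:
  fixes f :: "nat \<Rightarrow> real"
  assumes mono: "\<And>i j. i \<le> j \<Longrightarrow> j < M \<Longrightarrow> f i \<le> f j" and bL: "b \<le> L" and LM: "L \<le> M"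
  shows "real (M - b) * (\<Sum>q\<in>{b..<L}. f q) \<le> real (L - b) * (\<Sum>q\<in>{b..<M}. f q)"
proof (cases "L = M")
  case True then show ?thesis by simp
next
  case False
  then have LM': "L < M" using LM by simp
  have split: "(\<Sum>q\<in>{b..<M}. f q) = (\<Sum>q\<in>{b..<L}. f q) + (\<Sum>q\<in>{L..<M}. f q)"
    using bL LM by (simp add: sum.atLeastLessThan_concat)
  have s0: "(\<Sum>q\<in>{b..<L}. f q) \<le> real (L - b) * f L"
    using sum_bounded_above[of "{b..<L}" f "f L"] mono LM' by auto
  have s2: "real (M - L) * f L \<le> (\<Sum>q\<in>{L..<M}. f q)"
    using sum_bounded_below[of "{L..<M}" "f L" f] mono LM' by auto
  have "real (M - L) * (\<Sum>q\<in>{b..<L}. f q) \<le> real (L - b) * (\<Sum>q\<in>{L..<M}. f q)"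
    by (rule pivot[OF s0 s2]) auto
  then show ?thesis unfolding split using bL LM by (simp add: algebra_simps of_nat_diff)
qed

lemma indic_weights:
  fixes v :: "nat \<Rightarrow> real"
  assumes fin: "finite G" and SG: "S \<subseteq> G" and cS: "card S = K" and K: "K > 0"
  defines "\<beta> \<equiv> (\<lambda>j. if j \<in> S then 1 / real K else 0)"
  shows "(\<Sum>j\<in>G. \<beta> j * v j) = sum v S / real K"
    and "\<forall>j\<in>G. 0 \<le> \<beta> j \<and> \<beta> j \<le> 1 / real K"
    and "(\<Sum>j\<in>G. \<beta> j) = 1"
proof -
  have fS: "finite S" using fin SG finite_subset by blast
  have "(\<Sum>j\<in>G. \<beta> j * v j) = (\<Sum>j\<in>G. if j \<in> S then v j / real K else 0)"
    by (rule sum.cong) (auto simp: \<beta>_def)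
  also have "\<dots> = (\<Sum>j\<in>S. v j / real K)"
    using fin SG by (simp add: sum.If_cases Int_absorb1)
  also have "\<dots> = sum v S / real K" by (simp add: sum_divide_distrib)
  finally show "(\<Sum>j\<in>G. \<beta> j * v j) = sum v S / real K" .
  show "\<forall>j\<in>G. 0 \<le> \<beta> j \<and> \<beta> j \<le> 1 / real K" by (auto simp: \<beta>_def)
  have "(\<Sum>j\<in>G. \<beta> j) = (\<Sum>j\<in>S. 1 / real K)"
    using fin SG by (simp add: \<beta>_def sum.If_cases Int_absorb1)
  then show "(\<Sum>j\<in>G. \<beta> j) = 1" using cS K by simp
qed

lemma core:
  fixes v :: "nat \<Rightarrow> real" and G :: "nat set"
  assumes GS: "G \<subseteq> {..<n}" and Gc: "n \<le> card G + b" and nb: "2 * b < n"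
  shows "\<exists>\<beta>. trimmed_mean b (map v [0..<n]) = (\<Sum>j\<in>G. \<beta> j * v j)
     \<and> (\<forall>j\<in>G. 0 \<le> \<beta> j \<and> \<beta> j \<le> 1 / (real (card G) - real b))
     \<and> (\<Sum>j\<in>G. \<beta> j) = 1"
proof -
  have fin: "finite G" using GS finite_subset by blast
  define \<phi> where "\<phi> = card G"
  have phin: "\<phi> \<le> n" using GS unfolding \<phi>_def by (metis card_lessThan card_mono finite_lessThan)
  define e where "e = n - \<phi>"
  define gl where "gl = sort_key v (sorted_list_of_set G)"
  have gl_dist: "distinct gl" and gl_set: "set gl = G" and gl_len: "length gl = \<phi>"
    using fin by (auto simp: gl_def \<phi>_def)
  define gs where "gs = map v gl"
  have gs_sorted: "sorted gs" by (simp add: gs_def gl_def sorted_sort_key)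
  have gs_len: "length gs = \<phi>" by (simp add: gs_def gl_len)
  define vs where "vs = sort (map v [0..<n])"
  have vs_sorted: "sorted vs" and vs_len: "length vs = n" by (auto simp: vs_def)
  have sub: "mset gs \<subseteq># mset vs"
  proof -
    have "mset gs = image_mset v (mset_set G)"
      using fin by (simp add: gs_def gl_def flip: sorted_list_of_mset_set)
    moreover have "mset vs = image_mset v (mset_set {..<n})"
      by (simp add: vs_def lessThan_atLeast0 flip: mset_set_set)
    moreover have "mset_set G \<subseteq># mset_set {..<n}" using GS by (simp add: subset_imp_msubset_mset_set)
    ultimately show ?thesis by (simp add: image_mset_subseteq_mono)
  qed
  have lenx: "length vs = length gs + e" using vs_len gs_len phin e_def by simp
  have low: "gs ! p \<le> vs ! (p + e)" if "p < \<phi>" for p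
    using count_lower[OF vs_sorted gs_sorted sub lenx] that gs_len by simp
  have upp: "vs ! p \<le> gs ! p" if "p < \<phi>" for p
    using count_upper[OF vs_sorted gs_sorted sub] that gs_len by simp
  have gmono: "gs ! i \<le> gs ! j" if "i \<le> j" "j < \<phi>" for i j
    using sorted_nth_mono[OF gs_sorted] that gs_len by simp
  define N where "N = n - 2 * b"
  have Npos: "N > 0" using nb N_def by simp
  define T where "T = (\<Sum>r<N. vs ! (b + r))"
  have Tdef: "trimmed_mean b (map v [0..<n]) = T / real N"
  proof -
    have "drop b (take (n - b) vs) = drop b (take (n - b) vs)" ..
    have L: "length (drop b (take (n - b) vs)) = N" using vs_len nb N_def by simp
    have "sum_list (drop b (take (n - b) vs)) = (\<Sum>r<N. drop b (take (n - b) vs) ! r)"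
      by (simp only: sum_list_sum_nth L lessThan_atLeast0)
    also have "\<dots> = T" unfolding T_def
      by (rule sum.cong) (use vs_len nb N_def in auto)
    finally show ?thesis using vs_len nb N_def by (simp add: trimmed_mean_def Let_def vs_def[symmetric])
  qed
  define K where "K = \<phi> - b"
  have Kpos: "K > 0" and KN: "N \<le> K" using Gc nb K_def N_def \<phi>_def by auto
  define dl where "dl = \<phi> + b - n"
  have T1: "(\<Sum>q\<in>{dl..<K}. gs ! q) \<le> T"
  proof -
    have "(\<Sum>q\<in>{dl..<K}. gs ! q) = (\<Sum>r<N. gs ! (r + dl))"
    proof -
      have "{dl..<K} = {0 + dl..<N + dl}" using K_def N_def dl_def nb Gc \<phi>_def phin by auto
      then show ?thesis using sum.shift_bounds_nat_ivl[of "(!) gs" 0 dl N] by (simp add: lessThan_atLeast0)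
    qed
    also have "\<dots> \<le> T" unfolding T_def
    proof (rule sum_mono)
      fix r assume "r \<in> {..<N}"
      then have r: "r < N" by simp
      have "r + dl < \<phi>" "r + dl + e = b + r" using r N_def dl_def e_def Gc phin \<phi>_def nb by auto
      then show "gs ! (r + dl) \<le> vs ! (b + r)" using low by metis
    qed
    finally show ?thesis .
  qed
  have A: "real (K - dl) * (\<Sum>q<K. gs ! q) \<le> real K * (\<Sum>q\<in>{dl..<K}. gs ! q)"
    by (rule avg_A) (use gmono K_def dl_def N_def nb Gc \<phi>_def phin in auto)
  have KdN: "K - dl = N" using K_def dl_def N_def nb Gc \<phi>_def phin by auto
  define lo where "lo = (\<Sum>q<K. gs ! q) / real K"
  have lo_le: "lo \<le> T / real N"
  proof -
    have "real N * (\<Sum>q<K. gs ! q) \<le> real K * (\<Sum>q\<in>{dl..<K}. gs ! q)" using A KdN by simp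
    also have "\<dots> \<le> real K * T" using T1 by (intro mult_left_mono) auto
    finally have "real N * (\<Sum>q<K. gs ! q) \<le> real K * T" .
    then show ?thesis using Npos Kpos unfolding lo_def by (simp add: field_simps)
  qed
  have T2: "T \<le> (\<Sum>q\<in>{b..<n-b}. gs ! q)"
  proof -
    have "T \<le> (\<Sum>r<N. gs ! (r + b))" unfolding T_def
    proof (rule sum_mono)
      fix r assume "r \<in> {..<N}"
      then have "b + r < \<phi>" using N_def Gc \<phi>_def by auto
      then show "vs ! (b + r) \<le> gs ! (r + b)" using upp by (simp add: add.commute)
    qed
    also have "\<dots> = (\<Sum>q\<in>{b..<n-b}. gs ! q)"
    proof -
      have "{b..<n-b} = {0 + b..<N + b}" using N_def nb by auto
      then show ?thesis using sum.shift_bounds_nat_ivl[of "(!) gs" 0 b N] by (simp add: lessThan_atLeast0)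
    qed
    finally show ?thesis .
  qed
  have B: "real (\<phi> - b) * (\<Sum>q\<in>{b..<n-b}. gs ! q) \<le> real (n - b - b) * (\<Sum>q\<in>{b..<\<phi>}. gs ! q)"
    by (rule avg_B) (use gmono nb Gc \<phi>_def in auto)
  define hi where "hi = (\<Sum>q\<in>{b..<\<phi>}. gs ! q) / real K"
  have hi_ge: "T / real N \<le> hi"
  proof -
    have "real K * T \<le> real K * (\<Sum>q\<in>{b..<n-b}. gs ! q)" using T2 by (intro mult_left_mono) auto
    also have "\<dots> \<le> real N * (\<Sum>q\<in>{b..<\<phi>}. gs ! q)"
    proof -
      have "\<phi> - b = K" "n - b - b = N" using K_def N_def by auto
      then show ?thesis using B by simp
    qed
    finally have "real K * T \<le> real N * (\<Sum>q\<in>{b..<\<phi>}. gs ! q)" .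
    then show ?thesis using Npos Kpos unfolding hi_def by (simp add: field_simps)
  qed
  define S1 where "S1 = set (take K gl)"
  define S2 where "S2 = set (drop b gl)"
  have S1G: "S1 \<subseteq> G" unfolding S1_def gl_set[symmetric] by (rule set_take_subset)
  have S2G: "S2 \<subseteq> G" unfolding S2_def gl_set[symmetric] by (rule set_drop_subset)
  have cS1: "card S1 = K"
  proof -
    have "card S1 = length (take K gl)" unfolding S1_def by (rule distinct_card) (simp add: gl_dist)
    also have "\<dots> = K" using gl_len K_def by simp
    finally show ?thesis .
  qed
  have cS2: "card S2 = K"
  proof -
    have "card S2 = length (drop b gl)" unfolding S2_def by (rule distinct_card) (simp add: gl_dist)
    also have "\<dots> = K" using gl_len K_def by simp
    finally show ?thesis .
  qed
  have sv1: "sum v S1 = (\<Sum>q<K. gs ! q)"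
  proof -
    have "sum v S1 = sum_list (map v (take K gl))" unfolding S1_def
      using gl_dist by (simp add: sum.distinct_set_conv_list)
    also have "\<dots> = sum_list (take K gs)" by (simp add: gs_def take_map)
    also have "\<dots> = (\<Sum>q<K. take K gs ! q)"
    proof -
      have "length (take K gs) = K" using gs_len K_def by simp
      then show ?thesis by (simp only: sum_list_sum_nth lessThan_atLeast0)
    qed
    also have "\<dots> = (\<Sum>q<K. gs ! q)" by (rule sum.cong) auto
    finally show ?thesis .
  qed
  have sv2: "sum v S2 = (\<Sum>q\<in>{b..<\<phi>}. gs ! q)"
  proof -
    have "sum v S2 = sum_list (map v (drop b gl))" unfolding S2_def
      using gl_dist by (simp add: sum.distinct_set_conv_list)
    also have "\<dots> = sum_list (drop b gs)" by (simp add: gs_def drop_map)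
    also have "\<dots> = (\<Sum>r<K. drop b gs ! r)"
    proof -
      have "length (drop b gs) = K" using gs_len K_def by simp
      then show ?thesis by (simp only: sum_list_sum_nth lessThan_atLeast0)
    qed
    also have "\<dots> = (\<Sum>r<K. gs ! (r + b))" 
      by (rule sum.cong) (use gs_len K_def in \<open>auto simp: add.commute\<close>)
    also have "\<dots> = (\<Sum>q\<in>{b..<\<phi>}. gs ! q)"
    proof -
      have "{b..<\<phi>} = {0 + b..<K + b}" using K_def Kpos by auto
      then show ?thesis using sum.shift_bounds_nat_ivl[of "(!) gs" 0 b K] by (simp add: lessThan_atLeast0)
    qed
    finally show ?thesis .
  qed
  define \<beta>1 where "\<beta>1 = (\<lambda>j. if j \<in> S1 then 1 / real K else 0)"
  define \<beta>2 where "\<beta>2 = (\<lambda>j. if j \<in> S2 then 1 / real K else 0)"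
  have w1a: "(\<Sum>j\<in>G. \<beta>1 j * v j) = sum v S1 / real K"
    unfolding \<beta>1_def by (rule indic_weights(1)[OF fin S1G cS1 Kpos])
  have w1b: "\<forall>j\<in>G. 0 \<le> \<beta>1 j \<and> \<beta>1 j \<le> 1 / real K"
    unfolding \<beta>1_def by (rule indic_weights(2)[OF fin S1G cS1 Kpos])
  have w1c: "(\<Sum>j\<in>G. \<beta>1 j) = 1"
    unfolding \<beta>1_def by (rule indic_weights(3)[OF fin S1G cS1 Kpos])
  note w1 = w1a w1b w1c
  have w2a: "(\<Sum>j\<in>G. \<beta>2 j * v j) = sum v S2 / real K"
    unfolding \<beta>2_def by (rule indic_weights(1)[OF fin S2G cS2 Kpos])
  have w2b: "\<forall>j\<in>G. 0 \<le> \<beta>2 j \<and> \<beta>2 j \<le> 1 / real K"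
    unfolding \<beta>2_def by (rule indic_weights(2)[OF fin S2G cS2 Kpos])
  have w2c: "(\<Sum>j\<in>G. \<beta>2 j) = 1"
    unfolding \<beta>2_def by (rule indic_weights(3)[OF fin S2G cS2 Kpos])
  note w2 = w2a w2b w2c
  have cK: "1 / (real (card G) - real b) = 1 / real K" using K_def \<phi>_def Kpos by (simp add: of_nat_diff)
  show ?thesis
  proof (cases "hi = lo")
    case True
    then have "T / real N = lo" using lo_le hi_ge by simp
    then show ?thesis using w1 Tdef sv1 cK lo_def by (intro exI[of _ \<beta>1]) auto
  next
    case False
    then have hl: "lo < hi" using lo_le hi_ge by simp
    define lam where "lam = (T / real N - lo) / (hi - lo)"
    have l0: "0 \<le> lam" and l1: "lam \<le> 1" using hl lo_le hi_ge unfolding lam_def by auto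
    define \<beta> where "\<beta> = (\<lambda>j. (1 - lam) * \<beta>1 j + lam * \<beta>2 j)"
    have "(\<Sum>j\<in>G. \<beta> j * v j) = (1 - lam) * (\<Sum>j\<in>G. \<beta>1 j * v j) + lam * (\<Sum>j\<in>G. \<beta>2 j * v j)"
      unfolding \<beta>_def sum_distrib_left sum.distrib[symmetric] by (rule sum.cong) (auto simp: algebra_simps)
    also have "\<dots> = (1 - lam) * lo + lam * hi" using w1 w2 sv1 sv2 lo_def hi_def by simp
    also have "\<dots> = T / real N"
    proof -
      have "lam * (hi - lo) = T / real N - lo" using hl unfolding lam_def by simp
      moreover have "(1 - lam) * lo + lam * hi = lo + lam * (hi - lo)" by (simp add: algebra_simps)
      ultimately show ?thesis by simp
    qed
    finally have e1: "trimmed_mean b (map v [0..<n]) = (\<Sum>j\<in>G. \<beta> j * v j)" using Tdef by simp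
    have e2: "\<forall>j\<in>G. 0 \<le> \<beta> j \<and> \<beta> j \<le> 1 / (real (card G) - real b)"
    proof
      fix j assume "j \<in> G"
      then have a: "0 \<le> \<beta>1 j" "\<beta>1 j \<le> 1 / real K" "0 \<le> \<beta>2 j" "\<beta>2 j \<le> 1 / real K"
        using w1(2) w2(2) by auto
      have "0 \<le> \<beta> j" unfolding \<beta>_def using a l0 l1 by simp
      moreover have "\<beta> j \<le> (1 - lam) * (1 / real K) + lam * (1 / real K)"
        unfolding \<beta>_def using a l0 l1 by (intro add_mono mult_left_mono) auto
      moreover have "(1 - lam) * (1 / real K) + lam * (1 / real K) = 1 / real K" by (simp add: add_divide_distrib[symmetric])
      ultimately show "0 \<le> \<beta> j \<and> \<beta> j \<le> 1 / (real (card G) - real b)" using cK by simp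
    qed
    have e3: "(\<Sum>j\<in>G. \<beta> j) = 1"
      using w1(3) w2(3) by (simp add: \<beta>_def sum.distrib sum_distrib_left[symmetric])
    show ?thesis using e1 e2 e3 by blast
  qed
qed

theorem lemma1:
  fixes n b d t i k :: nat
    and A :: "nat set"
    and nr :: "nat \<Rightarrow> nat"
    and H :: "nat \<Rightarrow> nat \<Rightarrow> nat \<Rightarrow> real"
    and \<theta> :: "nat \<Rightarrow> real"
    and w y :: "nat \<Rightarrow> nat \<Rightarrow> nat \<Rightarrow> real"
    and x z :: "nat \<Rightarrow> nat \<Rightarrow> nat \<Rightarrow> real"
    and m :: "nat \<Rightarrow> nat \<Rightarrow> nat \<Rightarrow> nat \<Rightarrow> real"
  assumes nb: "2 * b < n"
    and A_sub: "A \<subseteq> {..<n}"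
    and A_card: "card A \<le> b"
    and obs: "\<forall>j<n. j \<notin> A \<longrightarrow> (\<forall>s\<ge>1. \<forall>r<nr j.
               y j s r = (\<Sum>c<d. H j r c * \<theta> c) + w j s r)"
    and z_def: "\<forall>j<n. j \<notin> A \<longrightarrow> (\<forall>s\<ge>1. \<forall>l<d.
               z j s l = x j (s - 1) l
                 - (\<Sum>r<nr j. H j r l * ((\<Sum>c<d. H j r c * x j (s - 1) c)
                                           - (\<Sum>q=1..s. y j q r) / real s)))"
    and msg: "\<forall>s\<ge>1. \<forall>j<n. \<forall>l<n. l \<notin> A \<longrightarrow> j \<notin> A \<longrightarrow> m s j l = z j s"
    and x_def: "\<forall>s\<ge>1. \<forall>l<n. l \<notin> A \<longrightarrow> (\<forall>c<d.
               x l s c = trimmed_mean b (map (\<lambda>j. m s j l c) [0..<n]))"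
    and t: "t \<ge> 1" and i: "i < n" "i \<notin> A" and k: "k < d"
  shows "\<exists>\<beta> :: nat \<Rightarrow> real.
           x i t k = (\<Sum>j\<in>{..<n} - A. \<beta> j * z j t k)
         \<and> (\<forall>j\<in>{..<n} - A. 0 \<le> \<beta> j \<and> \<beta> j \<le> 1 / (real (card ({..<n} - A)) - real b))
         \<and> (\<Sum>j\<in>{..<n} - A. \<beta> j) = 1"
proof -
  define G where "G = {..<n} - A"
  have finA: "finite A" using A_sub finite_subset by blast
  have cG: "card G = n - card A" unfolding G_def using A_sub finA by (simp add: card_Diff_subset)
  have GS: "G \<subseteq> {..<n}" unfolding G_def by blast
  have Gc: "n \<le> card G + b" using cG A_card by simp
  obtain \<beta> where b1: "trimmed_mean b (map (\<lambda>j. m t j i k) [0..<n]) = (\<Sum>j\<in>G. \<beta> j * m t j i k)"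
    and b2: "\<forall>j\<in>G. 0 \<le> \<beta> j \<and> \<beta> j \<le> 1 / (real (card G) - real b)"
    and b3: "(\<Sum>j\<in>G. \<beta> j) = 1"
    using core[OF GS Gc nb, of "\<lambda>j. m t j i k"] by blast
  have "x i t k = trimmed_mean b (map (\<lambda>j. m t j i k) [0..<n])" using x_def t i k by blast
  also have "\<dots> = (\<Sum>j\<in>G. \<beta> j * z j t k)" unfolding b1
  proof (rule sum.cong)
    fix j assume "j \<in> G"
    then have "m t j i = z j t" using msg t i unfolding G_def by blast
    then show "\<beta> j * m t j i k = \<beta> j * z j t k" by simp
  qed simp
  finally show ?thesis using b2 b3 unfolding G_def by blast
qed

end
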